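(* Let $k\geq2$ be an integer. Suppose $\mu$ is a constant sum strong Rayleigh measure on $2^{[n]}$ such that $$\mathbb{P}[S:i\in S]=\sum_{S\ni i}\mu(\{S\})\leq\Big(\frac1{\sqrt{k-1}}-\frac1{\sqrt k}\Big)^2$$ for all $1\leq i\leq n$. Then the support of $\mu$ contains $k$ pairwise disjoint sets (i.e. the matroid whose set of bases is the support of $\mu$ has $k$ disjoint bases).
   Context: A discrete probability measure $\mu$ on $2^{[n]}$ has multivariate partition function $P_\mu(\mathbf{x})=\sum_{S\subseteq[n]}\mu(\{S\})\prod_{j\in S}x_j$; $\mu$ is strong Rayleigh if $P_\mu(\mathbf{x})\neq0$ whenever $\operatorname{Im}(x_j)>0$ for all $j$, and of constant sum $d$ if $|S|=d$ whenever $\mu(\{S\})\neq0$. The support of $\mu$ is $\{S:\mu(\{S\})>0\}$; for a constant sum strong Rayleigh measure the support is the set of bases of a matroid on $[n]$. *)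

theory Defs
  imports Complex_Main
begin

text \<open>A discrete probability measure on 2^[n], [n] = {1..n}, given by its point masses
  mu S for S \<subseteq> {1..n} (values of mu on other sets are irrelevant).\<close>
definition prob_measure_on :: "nat \<Rightarrow> (nat set \<Rightarrow> real) \<Rightarrow> bool" where
  "prob_measure_on n mu \<longleftrightarrow>
     (\<forall>S. S \<subseteq> {1..n} \<longrightarrow> mu S \<ge> 0) \<and> (\<Sum>S\<in>Pow {1..n}. mu S) = 1"

definition partition_fn :: "nat \<Rightarrow> (nat set \<Rightarrow> real) \<Rightarrow> (nat \<Rightarrow> complex) \<Rightarrow> complex" where
  "partition_fn n mu x = (\<Sum>S\<in>Pow {1..n}. complex_of_real (mu S) * (\<Prod>j\<in>S. x j))"

definition strong_rayleigh :: "nat \<Rightarrow> (nat set \<Rightarrow> real) \<Rightarrow> bool" where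
  "strong_rayleigh n mu \<longleftrightarrow>
     (\<forall>x. (\<forall>j\<in>{1..n}. Im (x j) > 0) \<longrightarrow> partition_fn n mu x \<noteq> 0)"

definition constant_sum :: "nat \<Rightarrow> (nat set \<Rightarrow> real) \<Rightarrow> nat \<Rightarrow> bool" where
  "constant_sum n mu d \<longleftrightarrow> (\<forall>S. S \<subseteq> {1..n} \<longrightarrow> mu S \<noteq> 0 \<longrightarrow> card S = d)"

definition support :: "nat \<Rightarrow> (nat set \<Rightarrow> real) \<Rightarrow> nat set set" where
  "support n mu = {S. S \<subseteq> {1..n} \<and> mu S > 0}"

definition marginal :: "nat \<Rightarrow> (nat set \<Rightarrow> real) \<Rightarrow> nat \<Rightarrow> real" where
  "marginal n mu i = (\<Sum>S\<in>{S\<in>Pow {1..n}. i \<in> S}. mu S)"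

end

theory Submission imports Defs begin


definition Pg :: "nat \<Rightarrow> (nat set \<Rightarrow> real) \<Rightarrow> (nat \<Rightarrow> 'a::real_normed_field) \<Rightarrow> 'a" where
  "Pg n mu z = (\<Sum>S\<in>Pow {1..n}. of_real (mu S) * (\<Prod>j\<in>S. z j))"

definition Cg :: "nat \<Rightarrow> (nat set \<Rightarrow> real) \<Rightarrow> nat \<Rightarrow> nat \<Rightarrow> bool \<Rightarrow> bool \<Rightarrow> (nat \<Rightarrow> 'a::real_normed_field) \<Rightarrow> 'a" where
  "Cg n mu a b p q z = (\<Sum>S\<in>{S\<in>Pow {1..n}. (a\<in>S) = p \<and> (b\<in>S) = q}. of_real (mu S) * (\<Prod>j\<in>S-{a,b}. z j))"

lemma Cg_cong:
  assumes "\<And>j. j \<noteq> a \<Longrightarrow> j \<noteq> b \<Longrightarrow> z j = z' j"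
  shows "Cg n mu a b p q z = Cg n mu a b p q z'"
proof -
  have "\<And>S. (\<Prod>j\<in>S-{a,b}. z j) = (\<Prod>j\<in>S-{a,b}. z' j)"
    by (rule prod.cong[OF refl]) (simp add: assms)
  then show ?thesis unfolding Cg_def by simp
qed

lemma Cg_of_real: "Cg n mu a b p q (\<lambda>j. of_real (y j) :: 'a::real_normed_field) = of_real (Cg n mu a b p q y)"
  unfolding Cg_def of_real_sum of_real_mult of_real_prod by simp

lemma Pg_decomp:
  fixes z :: "nat \<Rightarrow> 'a::real_normed_field"
  assumes "a \<noteq> b"
  shows "Pg n mu z = Cg n mu a b False False z + z a * Cg n mu a b True False z
     + z b * Cg n mu a b False True z + z a * z b * Cg n mu a b True True z"
proof -
  let ?g = "\<lambda>S. of_real (mu S) * (\<Prod>j\<in>S. z j)"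
  let ?P = "Pow {1..n}"
  have fin: "finite ?P" by simp
  have e: "?g S = (if a \<in> S then (if b \<in> S then z a * z b * (of_real (mu S) * (\<Prod>j\<in>S-{a,b}. z j))
        else z a * (of_real (mu S) * (\<Prod>j\<in>S-{a,b}. z j)))
       else (if b \<in> S then z b * (of_real (mu S) * (\<Prod>j\<in>S-{a,b}. z j))
        else (of_real (mu S) * (\<Prod>j\<in>S-{a,b}. z j))))" if "S \<in> ?P" for S
  proof -
    have fS: "finite S" using that finite_subset by auto
    consider "a \<in> S" "b \<in> S" | "a \<in> S" "b \<notin> S" | "a \<notin> S" "b \<in> S" | "a \<notin> S" "b \<notin> S" by blast
    then show ?thesis
    proof cases
      case 1
      have q1: "(\<Prod>j\<in>S. z j) = z a * (\<Prod>j\<in>S-{a}. z j)" using prod.remove[OF fS 1(1)] .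
      have q2: "(\<Prod>j\<in>S-{a}. z j) = z b * (\<Prod>j\<in>S-{a}-{b}. z j)"
        using prod.remove[of "S-{a}" b] fS 1 assms by simp
      have q3: "S - {a} - {b} = S - {a,b}" by auto
      have p: "(\<Prod>j\<in>S. z j) = z a * z b * (\<Prod>j\<in>S-{a,b}. z j)"
        unfolding q1 q2 q3 by (simp add: ac_simps)
      show ?thesis using 1 by (simp add: p ac_simps)
    next
      case 2
      have q1: "(\<Prod>j\<in>S. z j) = z a * (\<Prod>j\<in>S-{a}. z j)" using prod.remove[OF fS 2(1)] .
      have q3: "S - {a} = S - {a,b}" using 2 by auto
      have p: "(\<Prod>j\<in>S. z j) = z a * (\<Prod>j\<in>S-{a,b}. z j)"
        unfolding q1 q3 by (simp add: ac_simps)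
      show ?thesis using 2 by (simp add: p ac_simps)
    next
      case 3
      have q1: "(\<Prod>j\<in>S. z j) = z b * (\<Prod>j\<in>S-{b}. z j)" using prod.remove[OF fS 3(2)] .
      have q3: "S - {b} = S - {a,b}" using 3 by auto
      have p: "(\<Prod>j\<in>S. z j) = z b * (\<Prod>j\<in>S-{a,b}. z j)"
        unfolding q1 q3 by (simp add: ac_simps)
      show ?thesis using 3 by (simp add: p ac_simps)
    next
      case 4
      have q3: "S - {a,b} = S" using 4 by auto
      show ?thesis using 4 by (simp only: q3 if_False)
    qed
  qed
  have "Pg n mu z = (\<Sum>S\<in>?P. ?g S)" unfolding Pg_def ..
  also have "\<dots> = (\<Sum>S\<in>?P. (if a \<in> S then (if b \<in> S then z a * z b * (of_real (mu S) * (\<Prod>j\<in>S-{a,b}. z j))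
        else z a * (of_real (mu S) * (\<Prod>j\<in>S-{a,b}. z j)))
       else (if b \<in> S then z b * (of_real (mu S) * (\<Prod>j\<in>S-{a,b}. z j))
        else (of_real (mu S) * (\<Prod>j\<in>S-{a,b}. z j)))))"
    using e by (intro sum.cong refl) 
  also have "\<dots> = Cg n mu a b False False z + z a * Cg n mu a b True False z
     + z b * Cg n mu a b False True z + z a * z b * Cg n mu a b True True z"
  proof -
    let ?T = "\<lambda>S. of_real (mu S) * (\<Prod>j\<in>S-{a,b}. z j)"
    have c: "\<And>p q. Cg n mu a b p q z = (\<Sum>S\<in>?P. if (a\<in>S) = p \<and> (b\<in>S) = q then ?T S else 0)"
      unfolding Cg_def by (rule sum.inter_filter[OF fin])
    show ?thesis unfolding c sum_distrib_left sum.distrib[symmetric]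
      by (rule sum.cong[OF refl]) auto
  qed
  finally show ?thesis .
qed

lemma sr_rayleigh:
  assumes sr: "strong_rayleigh n mu" and ab: "a \<in> {1..n}" "b \<in> {1..n}" "a \<noteq> b"
  shows "Cg n mu a b False False y * Cg n mu a b True True y
     \<le> Cg n mu a b True False y * Cg n mu a b False True (y::nat\<Rightarrow>real)"
proof -
  define zz where "zz e = (\<lambda>j. complex_of_real (y j) + \<i> * complex_of_real e)" for e::real
  define C where "C e p q = Cg n mu a b p q (zz e)" for e p q
  define F where "F e = Im ((C e False False + \<i> * C e False True) * cnj (C e True False + \<i> * C e True True))" for e
  have pos: "F e \<ge> 0" if "e > 0" for e
  proof (rule ccontr)
    assume nF: "\<not> F e \<ge> 0"
    define al where "al = C e False False + \<i> * C e False True"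
    define be where "be = C e True False + \<i> * C e True True"
    have neg: "Im (al * cnj be) < 0" using nF unfolding F_def al_def be_def by simp
    have bnz: "be \<noteq> 0" using neg by auto
    define w where "w = - al / be"
    have "Im w = - Im (al * cnj be) / (norm be)^2" unfolding w_def complex_div_cnj[of "-al"]
      by (simp add: diff_divide_distrib)
    then have imw: "Im w > 0" using neg bnz by (simp add: divide_pos_pos)
    define z' where "z' = (\<lambda>j. if j = a then w else if j = b then \<i> else zz e j)"
    have "\<forall>j\<in>{1..n}. Im (z' j) > 0" using imw \<open>e>0\<close> by (auto simp: z'_def zz_def)
    then have nz: "partition_fn n mu z' \<noteq> 0" using sr unfolding strong_rayleigh_def by blast
    have cc: "\<And>p q. Cg n mu a b p q z' = C e p q" unfolding C_def by (rule Cg_cong) (simp add: z'_def)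
    have "partition_fn n mu z' = Pg n mu z'" unfolding partition_fn_def Pg_def ..
    also have "\<dots> = C e False False + w * C e True False + \<i> * C e False True + w * \<i> * C e True True"
      unfolding Pg_decomp[OF ab(3), of n mu z'] cc using ab(3) by (simp add: z'_def)
    also have "\<dots> = al + w * be" unfolding al_def be_def by (simp add: algebra_simps)
    also have "\<dots> = 0" using bnz unfolding w_def by simp
    finally show False using nz by simp
  qed
  have cont: "continuous_on UNIV F" unfolding F_def C_def zz_def Cg_def by (intro continuous_intros)
  then have "isCont F 0" using continuous_on_eq_continuous_at by blast
  then have "(F \<longlongrightarrow> F 0) (at 0)" unfolding isCont_def .
  then have "(F \<longlongrightarrow> F 0) (at_right 0)" by (rule tendsto_mono[OF at_le, rotated]) simp
  then have "F 0 \<ge> 0"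
    by (rule tendsto_lowerbound) (auto intro: eventually_mono[OF eventually_at_right_less] pos)
  moreover have "zz 0 = (\<lambda>j. of_real (y j))" unfolding zz_def by simp
  ultimately show ?thesis unfolding F_def C_def by (simp add: Cg_of_real algebra_simps)
qed



lemma local_to_global:
  fixes h :: "'a set \<Rightarrow> real"
  assumes fin: "finite E"
  and loc: "\<And>Z a b. Z \<subseteq> E \<Longrightarrow> a \<in> E \<Longrightarrow> b \<in> E \<Longrightarrow> a \<notin> Z \<Longrightarrow> b \<notin> Z \<Longrightarrow> a \<noteq> b \<Longrightarrow>
      h (insert a (insert b Z)) + h Z \<le> h (insert a Z) + h (insert b Z)"
  and XY: "X \<subseteq> E" "Y \<subseteq> E"
  shows "h (X \<union> Y) + h (X \<inter> Y) \<le> h X + h Y"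
proof -
  have step1: "h (insert a (Z \<union> D)) - h (Z \<union> D) \<le> h (insert a Z) - h Z"
    if "finite D" "D \<subseteq> E" "Z \<subseteq> E" "a \<in> E" "a \<notin> Z \<union> D" for D Z a
    using that
  proof (induction D rule: finite_induct)
    case empty
    then show ?case by simp
  next
    case (insert x D)
    have IH: "h (insert a (Z \<union> D)) - h (Z \<union> D) \<le> h (insert a Z) - h Z"
      using insert by auto
    show ?case
    proof (cases "x \<in> Z")
      case True
      then have "Z \<union> insert x D = Z \<union> D" by auto
      then show ?thesis using IH by simp
    next
      case False
      have l: "h (insert a (insert x (Z \<union> D))) + h (Z \<union> D) \<le> h (insert a (Z \<union> D)) + h (insert x (Z \<union> D))"
        using insert False by (intro loc) auto
      have "Z \<union> insert x D = insert x (Z \<union> D)" by auto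
      then show ?thesis using l IH by simp
    qed
  qed
  have step2: "h (X \<union> D) - h X \<le> h (Z \<union> D) - h Z"
    if "finite D" "D \<subseteq> E" "Z \<subseteq> X" "X \<subseteq> E" "D \<inter> X = {}" for D Z X
    using that
  proof (induction D rule: finite_induct)
    case empty
    then show ?case by simp
  next
    case (insert x D)
    have IH: "h (X \<union> D) - h X \<le> h (Z \<union> D) - h Z" using insert by auto
    have eq: "(Z \<union> D) \<union> (X - Z) = X \<union> D" using insert by auto
    have s: "h (insert x ((Z \<union> D) \<union> (X - Z))) - h ((Z \<union> D) \<union> (X - Z)) \<le> h (insert x (Z \<union> D)) - h (Z \<union> D)"
      using insert fin by (intro step1) (auto intro: finite_subset)
    have e1: "X \<union> insert x D = insert x (X \<union> D)" "Z \<union> insert x D = insert x (Z \<union> D)" by auto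
    show ?case using s IH unfolding eq e1 by simp
  qed
  have "h (X \<union> (Y - X)) - h X \<le> h ((X \<inter> Y) \<union> (Y - X)) - h (X \<inter> Y)"
    using XY fin by (intro step2) (auto intro: finite_subset)
  moreover have "X \<union> (Y - X) = X \<union> Y" "(X \<inter> Y) \<union> (Y - X) = Y" by auto
  ultimately show ?thesis by simp
qed



definition gt :: "nat \<Rightarrow> (nat set \<Rightarrow> real) \<Rightarrow> real \<Rightarrow> nat set \<Rightarrow> real" where
  "gt n mu t Z = Pg n mu (\<lambda>j. if j \<in> Z then t else 1)"

lemma gt_ge1:
  assumes pm: "prob_measure_on n mu" and t: "t \<ge> 1"
  shows "gt n mu t Z \<ge> 1"
proof -
  have "(\<Sum>S\<in>Pow {1..n}. mu S * 1) \<le> (\<Sum>S\<in>Pow {1..n}. mu S * (\<Prod>j\<in>S. if j \<in> Z then t else 1))"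
  proof (rule sum_mono)
    fix S assume "S \<in> Pow {1..n}"
    then have "mu S \<ge> 0" using pm unfolding prob_measure_on_def by auto
    moreover have "1 \<le> (\<Prod>j\<in>S. if j \<in> Z then t else 1)" using t by (intro prod_ge_1) auto
    ultimately show "mu S * 1 \<le> mu S * (\<Prod>j\<in>S. if j \<in> Z then t else 1)" by (intro mult_left_mono)
  qed
  then show ?thesis using pm unfolding gt_def Pg_def prob_measure_on_def by simp
qed

lemma gt_local:
  assumes sr: "strong_rayleigh n mu" and t: "t \<ge> 1"
    and Z: "Z \<subseteq> {1..n}" and ab: "a \<in> {1..n}" "b \<in> {1..n}" "a \<notin> Z" "b \<notin> Z" "a \<noteq> b"
  shows "gt n mu t (insert a (insert b Z)) * gt n mu t Z \<le> gt n mu t (insert a Z) * gt n mu t (insert b Z)"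
proof -
  define y where "y = (\<lambda>j. if j \<in> Z then t else (1::real))"
  define c where "c p q = Cg n mu a b p q y" for p q
  have ray: "c False False * c True True \<le> c True False * c False True"
    unfolding c_def by (rule sr_rayleigh[OF sr ab(1,2,5)])
  have cg: "Cg n mu a b p q (\<lambda>j. if j \<in> W then t else 1) = c p q"
    if "W - {a,b} = Z" for W p q
    unfolding c_def y_def by (rule Cg_cong) (use that in auto)
  have g: "gt n mu t W = c False False + (if a \<in> W then t else 1) * c True False
     + (if b \<in> W then t else 1) * c False True + (if a \<in> W then t else 1) * (if b \<in> W then t else 1) * c True True"
    if "W - {a,b} = Z" for W
    unfolding gt_def Pg_decomp[OF ab(5)] cg[OF that] by simp
  have w1: "insert a (insert b Z) - {a,b} = Z" "Z - {a,b} = Z" "insert a Z - {a,b} = Z" "insert b Z - {a,b} = Z"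
    using ab by auto
  have "gt n mu t (insert a Z) * gt n mu t (insert b Z) - gt n mu t (insert a (insert b Z)) * gt n mu t Z
     = (t - 1)^2 * (c True False * c False True - c False False * c True True)"
    unfolding g[OF w1(1)] g[OF w1(2)] g[OF w1(3)] g[OF w1(4)] using ab
    by (simp add: algebra_simps power2_eq_square)
  moreover have "(t - 1)^2 * (c True False * c False True - c False False * c True True) \<ge> 0"
    using ray by simp
  ultimately show ?thesis by linarith
qed

lemma gt_submod:
  assumes pm: "prob_measure_on n mu" and sr: "strong_rayleigh n mu" and t: "t \<ge> 1"
    and XY: "X \<subseteq> {1..n}" "Y \<subseteq> {1..n}"
  shows "gt n mu t (X \<union> Y) * gt n mu t (X \<inter> Y) \<le> gt n mu t X * gt n mu t Y"
proof -
  let ?h = "\<lambda>Z. ln (gt n mu t Z)"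
  have pos: "\<And>Z. gt n mu t Z > 0" using gt_ge1[OF pm t] by (meson less_le_trans zero_less_one)
  have "?h (X \<union> Y) + ?h (X \<inter> Y) \<le> ?h X + ?h Y"
  proof (rule local_to_global[of "{1..n}"])
    fix Z a b assume h: "Z \<subseteq> {1..n}" "a \<in> {1..n}" "b \<in> {1..n}" "a \<notin> Z" "b \<notin> Z" "a \<noteq> b"
    have "ln (gt n mu t (insert a (insert b Z)) * gt n mu t Z) \<le> ln (gt n mu t (insert a Z) * gt n mu t (insert b Z))"
      using gt_local[OF sr t h] ln_le_cancel_iff[OF mult_pos_pos[OF pos pos] mult_pos_pos[OF pos pos]] by blast
    then show "?h (insert a (insert b Z)) + ?h Z \<le> ?h (insert a Z) + ?h (insert b Z)"
      by (simp only: ln_mult_pos[OF pos pos])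
  qed (use XY in auto)
  then have "ln (gt n mu t (X \<union> Y) * gt n mu t (X \<inter> Y)) \<le> ln (gt n mu t X * gt n mu t Y)"
    by (simp only: ln_mult_pos[OF pos pos])
  then show ?thesis using ln_le_cancel_iff[OF mult_pos_pos[OF pos pos] mult_pos_pos[OF pos pos]] by blast
qed



definition rk :: "nat \<Rightarrow> (nat set \<Rightarrow> real) \<Rightarrow> nat set \<Rightarrow> nat" where
  "rk n mu X = Max ((\<lambda>S. card (S \<inter> X)) ` support n mu)"

lemma supp_fin: "finite (support n mu)"
  unfolding support_def by (rule finite_subset[of _ "Pow {1..n}"]) auto

lemma supp_ne: assumes pm: "prob_measure_on n mu" shows "support n mu \<noteq> {}"
proof
  assume e: "support n mu = {}"
  have "\<forall>S\<in>Pow {1..n}. mu S = 0"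
  proof
    fix S assume "S \<in> Pow {1..n}"
    moreover then have "mu S \<ge> 0" using pm unfolding prob_measure_on_def by auto
    ultimately show "mu S = 0" using e unfolding support_def by (metis (mono_tags, lifting) PowD empty_Collect_eq le_less)
  qed
  then have "(\<Sum>S\<in>Pow {1..n}. mu S) = 0" by simp
  then show False using pm unfolding prob_measure_on_def by simp
qed

lemma rk_ge: "S \<in> support n mu \<Longrightarrow> card (S \<inter> X) \<le> rk n mu X"
  unfolding rk_def by (rule Max_ge) (use supp_fin in auto)

lemma rk_attained: assumes pm: "prob_measure_on n mu"
  obtains S where "S \<in> support n mu" "card (S \<inter> X) = rk n mu X"
proof -
  have "rk n mu X \<in> (\<lambda>S. card (S \<inter> X)) ` support n mu"
    unfolding rk_def by (rule Max_in) (use supp_fin supp_ne[OF pm] in auto)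
  then show ?thesis using that by auto
qed

lemma gt_eq: "gt n mu t X = (\<Sum>S\<in>Pow {1..n}. mu S * t ^ card (S \<inter> X))"
  unfolding gt_def Pg_def
proof (rule sum.cong[OF refl])
  fix S assume "S \<in> Pow {1..n}"
  then have f: "finite S" by (auto intro: finite_subset)
  have "(\<Prod>j\<in>S. if j \<in> X then t else 1) = (\<Prod>j\<in>S \<inter> {j. j \<in> X}. t) * (\<Prod>j\<in>S \<inter> - {j. j \<in> X}. 1)"
    by (rule prod.If_cases[OF f])
  also have "\<dots> = t ^ card (S \<inter> X)" by simp
  finally show "of_real (mu S) * (\<Prod>j\<in>S. if j \<in> X then t else 1) = mu S * t ^ card (S \<inter> X)" by simp
qed

lemma gt_upper: assumes pm: "prob_measure_on n mu" and t: "t \<ge> 1"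
  shows "gt n mu t X \<le> t ^ rk n mu X"
proof -
  have "gt n mu t X \<le> (\<Sum>S\<in>Pow {1..n}. mu S * t ^ rk n mu X)"
    unfolding gt_eq
  proof (rule sum_mono)
    fix S assume S: "S \<in> Pow {1..n}"
    then have m: "mu S \<ge> 0" using pm unfolding prob_measure_on_def by auto
    show "mu S * t ^ card (S \<inter> X) \<le> mu S * t ^ rk n mu X"
    proof (cases "mu S = 0")
      case False
      then have "S \<in> support n mu" using S m unfolding support_def by auto
      then have "card (S \<inter> X) \<le> rk n mu X" by (rule rk_ge)
      then have "t ^ card (S \<inter> X) \<le> t ^ rk n mu X" using t by (rule power_increasing)
      then show ?thesis using m by (rule mult_left_mono)
    qed simp
  qed
  also have "\<dots> = (\<Sum>S\<in>Pow {1..n}. mu S) * t ^ rk n mu X" by (rule sum_distrib_right[symmetric])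
  also have "\<dots> = t ^ rk n mu X" using pm unfolding prob_measure_on_def by simp
  finally show ?thesis .
qed

lemma gt_lower: assumes pm: "prob_measure_on n mu" and t: "t \<ge> 0" and S: "S \<in> support n mu"
  shows "mu S * t ^ card (S \<inter> X) \<le> gt n mu t X"
  unfolding gt_eq
proof (rule member_le_sum)
  show "S \<in> Pow {1..n}" using S unfolding support_def by auto
  fix x assume "x \<in> Pow {1..n} - {S}"
  then show "0 \<le> mu x * t ^ card (x \<inter> X)" using pm t unfolding prob_measure_on_def by auto
qed simp

lemma rk_submod:
  assumes pm: "prob_measure_on n mu" and sr: "strong_rayleigh n mu"
    and XY: "X \<subseteq> {1..n}" "Y \<subseteq> {1..n}"
  shows "rk n mu (X \<union> Y) + rk n mu (X \<inter> Y) \<le> rk n mu X + rk n mu Y"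
proof (rule ccontr)
  assume "\<not> ?thesis"
  then have gtm: "rk n mu X + rk n mu Y + 1 \<le> rk n mu (X \<union> Y) + rk n mu (X \<inter> Y)" by simp
  obtain S1 where S1: "S1 \<in> support n mu" "card (S1 \<inter> (X \<union> Y)) = rk n mu (X \<union> Y)" using rk_attained[OF pm] .
  obtain S2 where S2: "S2 \<in> support n mu" "card (S2 \<inter> (X \<inter> Y)) = rk n mu (X \<inter> Y)" using rk_attained[OF pm] .
  define c where "c = mu S1 * mu S2"
  have c: "c > 0" using S1 S2 unfolding c_def support_def by auto
  define t where "t = 2 / c + 1"
  have t: "t \<ge> 1" using c unfolding t_def by simp
  define m where "m = rk n mu X + rk n mu Y"
  have "c * t ^ (m + 1) \<le> c * t ^ (rk n mu (X \<union> Y) + rk n mu (X \<inter> Y))"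
    using c t gtm unfolding m_def by (intro mult_left_mono power_increasing) auto
  also have "\<dots> = (mu S1 * t ^ card (S1 \<inter> (X \<union> Y))) * (mu S2 * t ^ card (S2 \<inter> (X \<inter> Y)))"
    unfolding c_def S1(2) S2(2) by (simp add: power_add algebra_simps)
  also have "\<dots> \<le> gt n mu t (X \<union> Y) * gt n mu t (X \<inter> Y)"
  proof (rule mult_mono)
    show "mu S1 * t ^ card (S1 \<inter> (X \<union> Y)) \<le> gt n mu t (X \<union> Y)" using gt_lower[OF pm _ S1(1)] t by simp
    show "mu S2 * t ^ card (S2 \<inter> (X \<inter> Y)) \<le> gt n mu t (X \<inter> Y)" using gt_lower[OF pm _ S2(1)] t by simp
    show "0 \<le> gt n mu t (X \<union> Y)" using gt_ge1[OF pm t] by (rule order_trans[OF zero_le_one])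
    show "0 \<le> mu S2 * t ^ card (S2 \<inter> (X \<inter> Y))" using S2 t unfolding support_def by simp
  qed
  also have "\<dots> \<le> gt n mu t X * gt n mu t Y" by (rule gt_submod[OF pm sr t XY])
  also have "\<dots> \<le> t ^ rk n mu X * t ^ rk n mu Y"
    using gt_upper[OF pm t] gt_ge1[OF pm t] t by (intro mult_mono) (auto intro: order_trans[OF zero_le_one])
  also have "\<dots> = t ^ m" unfolding m_def by (simp add: power_add)
  finally have "c * t ^ (m + 1) \<le> t ^ m" .
  then have "(c * t) * t ^ m \<le> 1 * t ^ m" by (simp add: algebra_simps)
  then have "c * t \<le> 1" using t by (subst (asm) mult_le_cancel_right) auto
  moreover have "c * t = 2 + c" using c unfolding t_def by (simp add: field_simps)
  ultimately show False using c by simp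
qed



definition rank_ax :: "'a set \<Rightarrow> ('a set \<Rightarrow> nat) \<Rightarrow> bool" where
 "rank_ax G r \<longleftrightarrow> r {} = 0 \<and> (\<forall>X Y. X \<subseteq> Y \<longrightarrow> Y \<subseteq> G \<longrightarrow> r X \<le> r Y)
   \<and> (\<forall>X x. X \<subseteq> G \<longrightarrow> x \<in> G \<longrightarrow> r (insert x X) \<le> r X + 1)
   \<and> (\<forall>X Y. X \<subseteq> G \<longrightarrow> Y \<subseteq> G \<longrightarrow> r (X \<union> Y) + r (X \<inter> Y) \<le> r X + r Y)"

lemma rank_empty: "rank_ax G r \<Longrightarrow> r {} = 0" by (simp add: rank_ax_def)
lemma rank_mono: "rank_ax G r \<Longrightarrow> X \<subseteq> Y \<Longrightarrow> Y \<subseteq> G \<Longrightarrow> r X \<le> r Y" by (simp add: rank_ax_def)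
lemma rank_unit: "rank_ax G r \<Longrightarrow> X \<subseteq> G \<Longrightarrow> x \<in> G \<Longrightarrow> r (insert x X) \<le> r X + 1" by (simp add: rank_ax_def)
lemma rank_sub: "rank_ax G r \<Longrightarrow> X \<subseteq> G \<Longrightarrow> Y \<subseteq> G \<Longrightarrow> r (X \<union> Y) + r (X \<inter> Y) \<le> r X + r Y" by (simp add: rank_ax_def)

lemma rank_ax_sub: assumes r: "rank_ax G r" and s: "G' \<subseteq> G" shows "rank_ax G' r"
  unfolding rank_ax_def
proof (intro conjI allI impI)
  show "r {} = 0" by (rule rank_empty[OF r])
  show "r X \<le> r Y" if "X \<subseteq> Y" "Y \<subseteq> G'" for X Y using that s by (intro rank_mono[OF r]) auto
  show "r (insert x X) \<le> r X + 1" if "X \<subseteq> G'" "x \<in> G'" for X x using that s by (intro rank_unit[OF r]) auto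
  show "r (X \<union> Y) + r (X \<inter> Y) \<le> r X + r Y" if "X \<subseteq> G'" "Y \<subseteq> G'" for X Y using that s by (intro rank_sub[OF r]) auto
qed

lemma rank_contr:
  assumes r: "rank_ax G r" and e: "e \<in> G" and re: "r {e} = 1"
  shows "rank_ax (G - {e}) (\<lambda>X. r (insert e X) - 1)"
proof -
  have ge: "r (insert e X) \<ge> 1" if "X \<subseteq> G" for X
    using rank_mono[OF r, of "{e}" "insert e X"] e that re by simp
  have mono: "r X \<le> r Y" if "X \<subseteq> Y" "Y \<subseteq> G" for X Y using r that by (rule rank_mono)
  have unit: "r (insert x X) \<le> r X + 1" if "X \<subseteq> G" "x \<in> G" for X x using r that by (rule rank_unit)
  have sub: "r (X \<union> Y) + r (X \<inter> Y) \<le> r X + r Y" if "X \<subseteq> G" "Y \<subseteq> G" for X Y using r that by (rule rank_sub)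
  show ?thesis unfolding rank_ax_def
  proof (intro conjI allI impI)
    show "r (insert e {}) - 1 = 0" using re by simp
  next
    fix X Y assume "X \<subseteq> Y" "Y \<subseteq> G - {e}"
    then have "r (insert e X) \<le> r (insert e Y)" using e by (intro mono) auto
    then show "r (insert e X) - 1 \<le> r (insert e Y) - 1" by simp
  next
    fix X x assume h: "X \<subseteq> G - {e}" "x \<in> G - {e}"
    have "r (insert x (insert e X)) \<le> r (insert e X) + 1" using h e by (intro unit) auto
    moreover have "insert x (insert e X) = insert e (insert x X)" by auto
    ultimately show "r (insert e (insert x X)) - 1 \<le> r (insert e X) - 1 + 1"
      using ge[of X] h by simp
  next
    fix X Y assume h: "X \<subseteq> G - {e}" "Y \<subseteq> G - {e}"
    have "r (insert e X \<union> insert e Y) + r (insert e X \<inter> insert e Y) \<le> r (insert e X) + r (insert e Y)"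
      using h e by (intro sub) auto
    moreover have "insert e X \<union> insert e Y = insert e (X \<union> Y)" "insert e X \<inter> insert e Y = insert e (X \<inter> Y)" by auto
    moreover have "r (insert e (X \<union> Y)) \<ge> 1" "r (insert e (X \<inter> Y)) \<ge> 1"
      using h ge[of "X \<union> Y"] ge[of "X \<inter> Y"] by auto
    ultimately show "r (insert e (X \<union> Y)) - 1 + (r (insert e (X \<inter> Y)) - 1) \<le> r (insert e X) - 1 + (r (insert e Y) - 1)"
      by simp
  qed
qed

lemma rank_single_le: "rank_ax G r \<Longrightarrow> e \<in> G \<Longrightarrow> r {e} \<le> 1"
  using rank_unit[of G r "{}" e] rank_empty[of G r] by simp

lemma rank_add_single: "rank_ax G r \<Longrightarrow> e \<in> G \<Longrightarrow> X \<subseteq> G \<Longrightarrow> e \<notin> X \<Longrightarrow> r (insert e X) \<le> r X + r {e}"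
proof -
  assume r: "rank_ax G r" "e \<in> G" "X \<subseteq> G" "e \<notin> X"
  then have "r (X \<union> {e}) + r (X \<inter> {e}) \<le> r X + r {e}" by (intro rank_sub) auto
  moreover have "X \<union> {e} = insert e X" "X \<inter> {e} = {}" using r by auto
  ultimately show ?thesis using rank_empty[OF r(1)] by simp
qed

lemma matroid_intersection:
  assumes "finite G" "rank_ax G r1" "rank_ax G r2" "\<forall>X\<subseteq>G. m \<le> r1 X + r2 (G - X)"
  shows "\<exists>I\<subseteq>G. r1 I = card I \<and> r2 I = card I \<and> m \<le> card I"
  using assms
proof (induction G arbitrary: r1 r2 m rule: finite_induct)
  case empty
  then have "m \<le> r1 {} + r2 {}" by auto
  then have "m = 0" using rank_empty[OF empty.prems(1)] rank_empty[OF empty.prems(2)] by simp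
  then show ?case using rank_empty[OF empty.prems(1)] rank_empty[OF empty.prems(2)] by (intro exI[of _ "{}"]) auto
next
  case (insert e G')
  let ?G = "insert e G'"
  have R1: "rank_ax ?G r1" and R2: "rank_ax ?G r2" using insert by auto
  have H: "\<And>X. X \<subseteq> ?G \<Longrightarrow> m \<le> r1 X + r2 (?G - X)" using insert by auto
  have sub1: "\<And>X Y. X \<subseteq> ?G \<Longrightarrow> Y \<subseteq> ?G \<Longrightarrow> r1 (X \<union> Y) + r1 (X \<inter> Y) \<le> r1 X + r1 Y"
    using R1 by (rule rank_sub)
  have sub2: "\<And>X Y. X \<subseteq> ?G \<Longrightarrow> Y \<subseteq> ?G \<Longrightarrow> r2 (X \<union> Y) + r2 (X \<inter> Y) \<le> r2 X + r2 Y"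
    using R2 by (rule rank_sub)
  show ?case
  proof (cases "m = 0")
    case True
    then show ?thesis using rank_empty[OF R1] rank_empty[OF R2] by (intro exI[of _ "{}"]) auto
  next
    case m0: False
    show ?thesis
    proof (cases "\<forall>X\<subseteq>G'. m \<le> r1 X + r2 (G' - X)")
      case True
      have "rank_ax G' r1" "rank_ax G' r2" using R1 R2 by (auto intro: rank_ax_sub)
      then obtain I where "I \<subseteq> G'" "r1 I = card I \<and> r2 I = card I \<and> m \<le> card I"
        using insert.IH[of r1 r2 m] True by blast
      then show ?thesis by blast
    next
      case False
      then obtain X0 where X0: "X0 \<subseteq> G'" "r1 X0 + r2 (G' - X0) < m" by (auto simp: not_le)
      have eX0: "e \<notin> X0" using X0 insert by auto
      have r1e: "r1 {e} = 1"
      proof -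
        have "m \<le> r1 (insert e X0) + r2 (?G - insert e X0)" using X0 by (intro H) auto
        moreover have "?G - insert e X0 = G' - X0" using insert by auto
        ultimately have "m \<le> r1 (insert e X0) + r2 (G' - X0)" by simp
        moreover have "r1 (insert e X0) \<le> r1 X0 + r1 {e}" using rank_add_single[OF R1 _ _ eX0] X0 by auto
        ultimately have "r1 {e} \<ge> 1" using X0 by linarith
        then show ?thesis using rank_single_le[OF R1] by (meson insertI1 le_antisym)
      qed
      have r2e: "r2 {e} = 1"
      proof -
        have "m \<le> r1 X0 + r2 (?G - X0)" using X0 by (intro H) auto
        moreover have "?G - X0 = insert e (G' - X0)" using eX0 by auto
        ultimately have "m \<le> r1 X0 + r2 (insert e (G' - X0))" by simp
        moreover have "r2 (insert e (G' - X0)) \<le> r2 (G' - X0) + r2 {e}"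
          using insert.hyps(2) by (intro rank_add_single[OF R2]) auto
        ultimately have "r2 {e} \<ge> 1" using X0 by linarith
        then show ?thesis using rank_single_le[OF R2] by (meson insertI1 le_antisym)
      qed
      define r1' where "r1' X = r1 (insert e X) - 1" for X
      define r2' where "r2' X = r2 (insert e X) - 1" for X
      have C1: "rank_ax G' r1'" unfolding r1'_def using rank_contr[OF R1 _ r1e] insert by simp
      have C2: "rank_ax G' r2'" unfolding r2'_def using rank_contr[OF R2 _ r2e] insert by simp
      have ge1: "r1 (insert e X) \<ge> 1" "r2 (insert e X) \<ge> 1" if "X \<subseteq> G'" for X
        using rank_mono[OF R1, of "{e}" "insert e X"] rank_mono[OF R2, of "{e}" "insert e X"] r1e r2e that by auto
      have HC: "\<forall>Y\<subseteq>G'. m - 1 \<le> r1' Y + r2' (G' - Y)"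
      proof (rule ccontr)
        assume "\<not> ?thesis"
        then obtain Y0 where Y0: "Y0 \<subseteq> G'" "r1' Y0 + r2' (G' - Y0) < m - 1" by (auto simp: not_le)
        have eY0: "e \<notin> Y0" using Y0 insert by auto
        have e1: "insert e (G' - Y0) = ?G - Y0" using eY0 by auto
        have A: "r1 (insert e Y0) + r2 (?G - Y0) \<le> m"
          using Y0(2) ge1[of Y0] ge1[of "G' - Y0"] Y0(1) m0 unfolding r1'_def r2'_def e1 by auto
        have s1: "r1 (insert e (X0 \<union> Y0)) + r1 (X0 \<inter> Y0) \<le> r1 X0 + r1 (insert e Y0)"
        proof -
          have "r1 (X0 \<union> insert e Y0) + r1 (X0 \<inter> insert e Y0) \<le> r1 X0 + r1 (insert e Y0)"
            using X0 Y0 by (intro sub1) auto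
          moreover have "X0 \<union> insert e Y0 = insert e (X0 \<union> Y0)" "X0 \<inter> insert e Y0 = X0 \<inter> Y0" using eX0 by auto
          ultimately show ?thesis by simp
        qed
        have s2: "r2 (?G - (X0 \<inter> Y0)) + r2 (?G - insert e (X0 \<union> Y0)) \<le> r2 (G' - X0) + r2 (?G - Y0)"
        proof -
          have "r2 ((G' - X0) \<union> (?G - Y0)) + r2 ((G' - X0) \<inter> (?G - Y0)) \<le> r2 (G' - X0) + r2 (?G - Y0)"
            by (intro sub2) auto
          moreover have "(G' - X0) \<union> (?G - Y0) = ?G - (X0 \<inter> Y0)" using eY0 insert by auto
          moreover have "(G' - X0) \<inter> (?G - Y0) = ?G - insert e (X0 \<union> Y0)" using insert by auto
          ultimately show ?thesis by simp
        qed
        have h1: "m \<le> r1 (X0 \<inter> Y0) + r2 (?G - (X0 \<inter> Y0))" using X0 by (intro H) auto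
        have h2: "m \<le> r1 (insert e (X0 \<union> Y0)) + r2 (?G - insert e (X0 \<union> Y0))" using X0 Y0 by (intro H) auto
        show False using s1 s2 h1 h2 A X0(2) by linarith
      qed
      obtain I' where I': "I' \<subseteq> G'" "r1' I' = card I'" "r2' I' = card I'" "m - 1 \<le> card I'"
        using insert.IH[OF C1 C2 HC] by blast
      have eI: "e \<notin> I'" using I' insert by auto
      have fI: "finite I'" using I' insert finite_subset by auto
      have cI: "card (insert e I') = card I' + 1" using eI fI by simp
      show ?thesis
      proof (intro exI[of _ "insert e I'"] conjI)
        show "insert e I' \<subseteq> ?G" using I' by auto
        show "r1 (insert e I') = card (insert e I')" using I'(2) ge1[OF I'(1)] cI unfolding r1'_def by simp
        show "r2 (insert e I') = card (insert e I')" using I'(3) ge1[OF I'(1)] cI unfolding r2'_def by simp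
        show "m \<le> card (insert e I')" using I'(4) cI by simp
      qed
    qed
  qed
qed



lemma eps_le:
  assumes k: "k \<ge> (2::nat)"
  shows "(1 / sqrt (real k - 1) - 1 / sqrt (real k))^2 \<le> 1 / real k"
proof -
  define u where "u = 1 / sqrt (real k - 1)"
  define v where "v = 1 / sqrt (real k)"
  have k1: "real k - 1 \<ge> 1" using k by simp
  have sk: "sqrt (real k - 1) > 0" "sqrt (real k) > 0" using k1 by auto
  have "sqrt (real k - 1) \<le> sqrt (real k)" by (rule real_sqrt_le_mono) simp
  then have uv: "v \<le> u" unfolding u_def v_def using sk by (simp add: frac_le)
  have "sqrt (real k) \<le> sqrt (4 * (real k - 1))" using k by (intro real_sqrt_le_mono) simp
  also have "\<dots> = sqrt 4 * sqrt (real k - 1)" by (rule real_sqrt_mult)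
  also have "sqrt (4::real) = 2" by (rule real_sqrt_unique) auto
  finally have "sqrt (real k) \<le> 2 * sqrt (real k - 1)" .
  then have "u \<le> 2 * v" unfolding u_def v_def using sk by (simp add: field_simps)
  then have "(u - v)^2 \<le> v^2" using uv by (intro power_mono) auto
  moreover have "v^2 = 1 / real k" unfolding v_def using k by (simp add: power_divide)
  ultimately show ?thesis unfolding u_def v_def by simp
qed

lemma key_ineq:
  assumes pm: "prob_measure_on n mu" and cs: "constant_sum n mu d"
    and k: "k \<ge> (2::nat)"
    and marg: "\<forall>i\<in>{1..n}. marginal n mu i \<le> (1 / sqrt (real k - 1) - 1 / sqrt (real k))^2"
    and Z: "Z \<subseteq> {1..n}"
  shows "k * d \<le> k * rk n mu Z + card ({1..n} - Z)"
proof -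
  let ?P = "Pow {1..n}" and ?A = "{1..n} - Z"
  have finA: "finite ?A" by simp
  have "(\<Sum>e\<in>?A. marginal n mu e) = (\<Sum>e\<in>?A. \<Sum>S\<in>?P. if e \<in> S then mu S else 0)"
    unfolding marginal_def by (intro sum.cong refl sum.inter_filter) simp
  also have "\<dots> = (\<Sum>S\<in>?P. \<Sum>e\<in>?A. if e \<in> S then mu S else 0)" by (rule sum.swap)
  also have "\<dots> = (\<Sum>S\<in>?P. mu S * real (card (S - Z)))"
  proof (rule sum.cong[OF refl])
    fix S assume S: "S \<in> ?P"
    have "(\<Sum>e\<in>?A. if e \<in> S then mu S else 0) = (\<Sum>e\<in>?A \<inter> S. mu S)"
      by (rule sum.inter_restrict[OF finA, symmetric])
    also have "?A \<inter> S = S - Z" using S by auto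
    finally show "(\<Sum>e\<in>?A. if e \<in> S then mu S else 0) = mu S * real (card (S - Z))" by simp
  qed
  finally have eq: "(\<Sum>e\<in>?A. marginal n mu e) = (\<Sum>S\<in>?P. mu S * real (card (S - Z)))" .
  have "(\<Sum>S\<in>?P. mu S * (real d - real (rk n mu Z))) \<le> (\<Sum>S\<in>?P. mu S * real (card (S - Z)))"
  proof (rule sum_mono)
    fix S assume S: "S \<in> ?P"
    have m: "mu S \<ge> 0" using pm S unfolding prob_measure_on_def by auto
    show "mu S * (real d - real (rk n mu Z)) \<le> mu S * real (card (S - Z))"
    proof (cases "mu S = 0")
      case False
      then have sup: "S \<in> support n mu" using S m unfolding support_def by auto
      have cS: "card S = d" using cs S False unfolding constant_sum_def by auto
      have fS: "finite S" using S by (auto intro: finite_subset)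
      have "card S = card (S \<inter> Z) + card (S - Z)" by (rule card_Int_Diff[OF fS])
      moreover have "card (S \<inter> Z) \<le> rk n mu Z" by (rule rk_ge[OF sup])
      ultimately have "real d - real (rk n mu Z) \<le> real (card (S - Z))" using cS by linarith
      then show ?thesis using m by (rule mult_left_mono)
    qed simp
  qed
  also have "\<dots> = (\<Sum>e\<in>?A. marginal n mu e)" using eq by simp
  also have "\<dots> \<le> (\<Sum>e\<in>?A. 1 / real k)"
  proof (rule sum_mono)
    fix e assume "e \<in> ?A"
    then show "marginal n mu e \<le> 1 / real k" using marg eps_le[OF k] by force
  qed
  also have "\<dots> = real (card ?A) / real k" by simp
  finally have "(\<Sum>S\<in>?P. mu S) * (real d - real (rk n mu Z)) \<le> real (card ?A) / real k"
    by (simp add: sum_distrib_right)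
  then have "real d - real (rk n mu Z) \<le> real (card ?A) / real k"
    using pm unfolding prob_measure_on_def by simp
  then have "real k * (real d - real (rk n mu Z)) \<le> real (card ?A)"
    using k by (simp add: field_simps)
  then have "real (k * d) \<le> real (k * rk n mu Z + card ?A)" by (simp add: algebra_simps)
  then show ?thesis by linarith
qed



lemma rk_le_card: assumes pm: "prob_measure_on n mu" and fX: "finite X" shows "rk n mu X \<le> card X"
proof -
  obtain S where S: "S \<in> support n mu" "card (S \<inter> X) = rk n mu X" using rk_attained[OF pm] .
  have "card (S \<inter> X) \<le> card X" using fX by (intro card_mono) auto
  then show ?thesis using S by simp
qed

lemma rk_le_d: assumes pm: "prob_measure_on n mu" and cs: "constant_sum n mu d"
  shows "rk n mu X \<le> d"
proof -
  obtain S where S: "S \<in> support n mu" "card (S \<inter> X) = rk n mu X" using rk_attained[OF pm] .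
  have fS: "finite S" using S unfolding support_def by (auto intro: finite_subset)
  have "card S = d" using S cs unfolding support_def constant_sum_def by auto
  moreover have "card (S \<inter> X) \<le> card S" using fS by (intro card_mono) auto
  ultimately show ?thesis using S by simp
qed

lemma rk_rank_ax: assumes pm: "prob_measure_on n mu" and sr: "strong_rayleigh n mu"
  shows "rank_ax {1..n} (rk n mu)"
  unfolding rank_ax_def
proof (intro conjI allI impI)
  show "rk n mu {} = 0" using rk_le_card[OF pm, of "{}"] by simp
next
  fix X Y :: "nat set" assume "X \<subseteq> Y" "Y \<subseteq> {1..n}"
  obtain S where S: "S \<in> support n mu" "card (S \<inter> X) = rk n mu X" using rk_attained[OF pm] .
  have fS: "finite S" using S unfolding support_def by (auto intro: finite_subset)
  have "card (S \<inter> X) \<le> card (S \<inter> Y)" using fS \<open>X \<subseteq> Y\<close> by (intro card_mono) auto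
  also have "\<dots> \<le> rk n mu Y" by (rule rk_ge[OF S(1)])
  finally show "rk n mu X \<le> rk n mu Y" using S by simp
next
  fix X :: "nat set" and x assume "X \<subseteq> {1..n}" "x \<in> {1..n}"
  obtain S where S: "S \<in> support n mu" "card (S \<inter> insert x X) = rk n mu (insert x X)" using rk_attained[OF pm] .
  have fS: "finite S" using S unfolding support_def by (auto intro: finite_subset)
  have "S \<inter> insert x X \<subseteq> insert x (S \<inter> X)" by auto
  then have "card (S \<inter> insert x X) \<le> card (insert x (S \<inter> X))" using fS by (intro card_mono) auto
  also have "\<dots> \<le> card (S \<inter> X) + 1" using fS by (simp add: card_insert_if)
  also have "\<dots> \<le> rk n mu X + 1" using rk_ge[OF S(1)] by simp
  finally show "rk n mu (insert x X) \<le> rk n mu X + 1" using S by simp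
next
  fix X Y :: "nat set" assume "X \<subseteq> {1..n}" "Y \<subseteq> {1..n}"
  then show "rk n mu (X \<union> Y) + rk n mu (X \<inter> Y) \<le> rk n mu X + rk n mu Y"
    by (rule rk_submod[OF pm sr])
qed

theorem theorem8p2:
  fixes n k d :: nat and mu :: "nat set \<Rightarrow> real"
  assumes "k \<ge> 2"
    and "prob_measure_on n mu"
    and "strong_rayleigh n mu"
    and "constant_sum n mu d"
    and "\<forall>i\<in>{1..n}. marginal n mu i \<le> (1 / sqrt (real k - 1) - 1 / sqrt (real k))^2"
  shows "\<exists>B :: nat \<Rightarrow> nat set. (\<forall>i<k. B i \<in> support n mu) \<and>
           (\<forall>i<k. \<forall>j<k. i \<noteq> j \<longrightarrow> B i \<inter> B j = {})"
proof -
  note k = assms(1) and pm = assms(2) and sr = assms(3) and cs = assms(4) and marg = assms(5)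
  let ?E = "{1..n}"
  let ?r = "rk n mu"
  define G where "G = {..<k} \<times> ?E"
  define sl where "sl X i = {e. (i, e) \<in> X}" for X :: "(nat \<times> nat) set" and i
  define r1 where "r1 X = (\<Sum>i<k. ?r (sl X i))" for X
  define r2 where "r2 X = card (snd ` X)" for X :: "(nat \<times> nat) set"
  have finG: "finite G" unfolding G_def by simp
  have R: "rank_ax ?E ?r" by (rule rk_rank_ax[OF pm sr])
  have slE: "sl X i \<subseteq> ?E" if "X \<subseteq> G" for X i using that unfolding sl_def G_def by auto
  have R1: "rank_ax G r1" unfolding rank_ax_def
  proof (intro conjI allI impI)
    show "r1 {} = 0" unfolding r1_def sl_def using rank_empty[OF R] by simp
  next
    fix X Y assume h: "X \<subseteq> Y" "Y \<subseteq> G"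
    show "r1 X \<le> r1 Y" unfolding r1_def
    proof (rule sum_mono)
      fix i assume "i \<in> {..<k}"
      show "?r (sl X i) \<le> ?r (sl Y i)" using h slE[of Y i] by (intro rank_mono[OF R]) (auto simp: sl_def)
    qed
  next
    fix X x assume h: "X \<subseteq> G" "x \<in> G"
    obtain i0 e0 where x: "x = (i0, e0)" by (cases x)
    have i0: "i0 \<in> {..<k}" using h x unfolding G_def by auto
    have "r1 (insert x X) \<le> (\<Sum>i<k. ?r (sl X i) + (if i = i0 then 1 else 0))" unfolding r1_def
    proof (rule sum_mono)
      fix i assume "i \<in> {..<k}"
      show "?r (sl (insert x X) i) \<le> ?r (sl X i) + (if i = i0 then 1 else 0)"
      proof (cases "i = i0")
        case True
        have "sl (insert x X) i = insert e0 (sl X i)" unfolding sl_def x True by auto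
        moreover have "?r (insert e0 (sl X i)) \<le> ?r (sl X i) + 1"
          using h x slE[of X i] unfolding G_def by (intro rank_unit[OF R]) auto
        ultimately show ?thesis using True by simp
      next
        case False
        have "sl (insert x X) i = sl X i" unfolding sl_def x using False by auto
        then show ?thesis by simp
      qed
    qed
    also have "\<dots> = r1 X + 1" unfolding r1_def sum.distrib using i0 by simp
    finally show "r1 (insert x X) \<le> r1 X + 1" .
  next
    fix X Y assume h: "X \<subseteq> G" "Y \<subseteq> G"
    have "r1 (X \<union> Y) + r1 (X \<inter> Y) = (\<Sum>i<k. ?r (sl X i \<union> sl Y i) + ?r (sl X i \<inter> sl Y i))"
      unfolding r1_def sum.distrib[symmetric] sl_def by (intro sum.cong refl arg_cong2[where f="(+)"] arg_cong[where f="?r"]) auto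
    also have "\<dots> \<le> (\<Sum>i<k. ?r (sl X i) + ?r (sl Y i))"
      using h slE by (intro sum_mono rank_sub[OF R]) auto
    also have "\<dots> = r1 X + r1 Y" unfolding r1_def sum.distrib ..
    finally show "r1 (X \<union> Y) + r1 (X \<inter> Y) \<le> r1 X + r1 Y" .
  qed
  have R2: "rank_ax G r2" unfolding rank_ax_def
  proof (intro conjI allI impI)
    show "r2 {} = 0" unfolding r2_def by simp
  next
    fix X Y assume h: "X \<subseteq> Y" "Y \<subseteq> G"
    then have "finite (snd ` Y)" using finG by (auto intro: finite_subset)
    then show "r2 X \<le> r2 Y" unfolding r2_def using h by (intro card_mono) auto
  next
    fix X x assume h: "X \<subseteq> G" "x \<in> G"
    then have "finite (snd ` X)" using finG by (auto intro: finite_subset)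
    then show "r2 (insert x X) \<le> r2 X + 1" unfolding r2_def by (simp add: card_insert_if)
  next
    fix X Y assume h: "X \<subseteq> G" "Y \<subseteq> G"
    have f: "finite (snd ` X)" "finite (snd ` Y)" using h finG by (auto intro: finite_subset)
    have "card (snd ` (X \<inter> Y)) \<le> card (snd ` X \<inter> snd ` Y)" using f by (intro card_mono) auto
    moreover have "card (snd ` X \<union> snd ` Y) + card (snd ` X \<inter> snd ` Y) = card (snd ` X) + card (snd ` Y)"
      using f by (rule card_Un_Int[symmetric])
    moreover have "snd ` (X \<union> Y) = snd ` X \<union> snd ` Y" by auto
    ultimately show "r2 (X \<union> Y) + r2 (X \<inter> Y) \<le> r2 X + r2 Y" unfolding r2_def by simp
  qed
  have H: "\<forall>X\<subseteq>G. k * d \<le> r1 X + r2 (G - X)"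
  proof (intro allI impI)
    fix X assume X: "X \<subseteq> G"
    define Z where "Z = {e \<in> ?E. \<forall>i<k. (i, e) \<in> X}"
    have Z: "Z \<subseteq> ?E" unfolding Z_def by auto
    have "k * ?r Z = (\<Sum>i<k. ?r Z)" by simp
    also have "\<dots> \<le> r1 X" unfolding r1_def
      using X slE by (intro sum_mono rank_mono[OF R]) (auto simp: Z_def sl_def)
    finally have a: "k * ?r Z \<le> r1 X" .
    have "?E - Z \<subseteq> snd ` (G - X)"
    proof
      fix e assume "e \<in> ?E - Z"
      then obtain i where "i < k" "(i, e) \<notin> X" "e \<in> ?E" unfolding Z_def by auto
      then show "e \<in> snd ` (G - X)" unfolding G_def by (auto intro: image_eqI[of _ _ "(i, e)"])
    qed
    then have b: "card (?E - Z) \<le> r2 (G - X)" unfolding r2_def using finG by (intro card_mono) auto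
    show "k * d \<le> r1 X + r2 (G - X)" using key_ineq[OF pm cs k marg Z] a b by linarith
  qed
  obtain I where I: "I \<subseteq> G" "r1 I = card I" "r2 I = card I" "k * d \<le> card I"
    using matroid_intersection[OF finG R1 R2 H] by blast
  define B where "B i = sl I i" for i
  have BE: "B i \<subseteq> ?E" for i unfolding B_def using slE[OF I(1)] .
  have finB: "finite (B i)" for i using BE finite_subset by blast
  have Isig: "I = (SIGMA i:{..<k}. B i)" using I(1) unfolding B_def sl_def G_def by auto
  have cardI: "card I = (\<Sum>i<k. card (B i))" unfolding Isig using finB by simp
  have r1I: "r1 I = (\<Sum>i<k. ?r (B i))" unfolding r1_def B_def ..
  have rd: "?r (B i) \<le> d" for i by (rule rk_le_d[OF pm cs])
  have rc: "?r (B i) \<le> card (B i)" for i by (rule rk_le_card[OF pm finB])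
  have s1: "(\<Sum>i<k. d - ?r (B i)) = k * d - (\<Sum>i<k. ?r (B i))"
    using sum_subtractf_nat[of "{..<k}" "\<lambda>i. ?r (B i)" "\<lambda>i. d"] rd by simp
  have "(\<Sum>i<k. ?r (B i)) \<le> k * d" using sum_mono[of "{..<k}" "\<lambda>i. ?r (B i)" "\<lambda>i. d"] rd by simp
  then have sumr: "(\<Sum>i<k. ?r (B i)) = k * d" using I r1I by linarith
  have rdeq: "?r (B i) = d" if "i < k" for i
  proof -
    have "(\<Sum>i<k. d - ?r (B i)) = 0" using s1 sumr by simp
    then have "d - ?r (B i) = 0" using that by simp
    then show ?thesis using rd[of i] by simp
  qed
  have s2: "(\<Sum>i<k. card (B i) - ?r (B i)) = (\<Sum>i<k. card (B i)) - (\<Sum>i<k. ?r (B i))"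
    using sum_subtractf_nat[of "{..<k}" "\<lambda>i. ?r (B i)" "\<lambda>i. card (B i)"] rc by simp
  have cdeq: "card (B i) = d" if "i < k" for i
  proof -
    have "(\<Sum>i<k. card (B i) - ?r (B i)) = 0" using s2 cardI r1I I(2) by simp
    then have "card (B i) - ?r (B i) = 0" using that by simp
    then show ?thesis using rc[of i] rdeq[OF that] by simp
  qed
  have Bsup: "B i \<in> support n mu" if "i < k" for i
  proof -
    obtain S where S: "S \<in> support n mu" "card (S \<inter> B i) = ?r (B i)" using rk_attained[OF pm] .
    have fS: "finite S" using S unfolding support_def by (auto intro: finite_subset)
    have cS: "card S = d" using S cs unfolding support_def constant_sum_def by auto
    have "S \<inter> B i = S" using fS S(2) rdeq[OF that] cS by (intro card_subset_eq) auto
    then have "S \<subseteq> B i" by auto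
    then have "S = B i" using finB cS cdeq[OF that] by (intro card_subset_eq) auto
    then show ?thesis using S by simp
  qed
  have inj: "inj_on snd I"
    using I(3) unfolding r2_def by (intro eq_card_imp_inj_on) (use finG I(1) finite_subset in auto)
  have disj: "B i \<inter> B j = {}" if "i \<noteq> j" for i j
  proof (rule ccontr)
    assume "B i \<inter> B j \<noteq> {}"
    then obtain e where ie: "(i, e) \<in> I" "(j, e) \<in> I" unfolding B_def sl_def by auto
    have "(i, e) = (j, e)" by (rule inj_onD[OF inj _ ie]) simp
    then show False using that by simp
  qed
  show ?thesis using Bsup disj by blast
qed


end
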